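(* Let $\alpha,\beta,\gamma\in\Bbbk^n$ and $\mathcal H=\mathcal H(\alpha,\beta,\gamma)$. If $\beta_i=0$ for some $i\in Q_0$, then $\mathcal H$ is not noetherian.
   Context: $\Bbbk$ is an algebraically closed field of characteristic zero. Fix $n\ge1$; indices mod $n$, $Q_0=\{0,\dots,n-1\}$. $Q$ is the quiver with vertices $Q_0$ and arrows $u_i:i\to i+1$, $d_i:i+1\to i$; paths are written left to right, $e_i$ is the trivial path at $i$. $\mathcal H(\alpha,\beta,\gamma)$ is $\Bbbk Q$ modulo the relations $d_{i-1}u_{i-1}u_i=\alpha_iu_id_iu_i+\beta_iu_iu_{i+1}d_{i+1}+\gamma_iu_i$ and $d_id_{i-1}u_{i-1}=\alpha_id_iu_id_i+\beta_iu_{i+1}d_{i+1}d_i+\gamma_id_i$ for all $i\in Q_0$. *)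

theory Defs
  imports "HOL-Algebra.QuotRing" "HOL-Computational_Algebra.Polynomial"
begin

datatype arr = U nat | D nat

fun arr_src :: "nat \<Rightarrow> arr \<Rightarrow> nat" where
  "arr_src n (U i) = i"
| "arr_src n (D i) = (i + 1) mod n"

fun arr_tgt :: "nat \<Rightarrow> arr \<Rightarrow> nat" where
  "arr_tgt n (U i) = (i + 1) mod n"
| "arr_tgt n (D i) = i"

fun arr_idx :: "arr \<Rightarrow> nat" where
  "arr_idx (U i) = i"
| "arr_idx (D i) = i"

text \<open>A path is a pair (start vertex, list of arrows), composed left to right;
  (i, []) is the trivial path e_i.\<close>
type_synonym path = "nat \<times> arr list"

fun valid_arrs :: "nat \<Rightarrow> nat \<Rightarrow> arr list \<Rightarrow> bool" where
  "valid_arrs n i [] = True"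
| "valid_arrs n i (a # as) =
     (arr_idx a < n \<and> arr_src n a = i \<and> valid_arrs n (arr_tgt n a) as)"

definition valid_path :: "nat \<Rightarrow> path \<Rightarrow> bool" where
  "valid_path n p = (fst p < n \<and> valid_arrs n (fst p) (snd p))"

fun end_vertex :: "nat \<Rightarrow> nat \<Rightarrow> arr list \<Rightarrow> nat" where
  "end_vertex n i [] = i"
| "end_vertex n i (a # as) = end_vertex n (arr_tgt n a) as"

definition path_cat :: "nat \<Rightarrow> path \<Rightarrow> path \<Rightarrow> path option" where
  "path_cat n p q =
     (if end_vertex n (fst p) (snd p) = fst q then Some (fst p, snd p @ snd q) else None)"

definition path_algebra :: "nat \<Rightarrow> (path \<Rightarrow> 'k::field) ring" where
  "path_algebra n =
     \<lparr> carrier = {f. finite {p. f p \<noteq> 0} \<and> (\<forall>p. f p \<noteq> 0 \<longrightarrow> valid_path n p)},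
       monoid.mult = (\<lambda>f g p. \<Sum>q\<in>{q. f q \<noteq> 0}. \<Sum>r\<in>{r. g r \<noteq> 0}.
                          (if path_cat n q r = Some p then f q * g r else 0)),
       one = (\<lambda>p. if snd p = [] \<and> fst p < n then 1 else 0),
       zero = (\<lambda>p. 0),
       add = (\<lambda>f g p. f p + g p) \<rparr>"

definition basis_path :: "path \<Rightarrow> (path \<Rightarrow> 'k::field)" where
  "basis_path p = (\<lambda>q. if q = p then 1 else 0)"

definition rel1 :: "nat \<Rightarrow> (nat \<Rightarrow> 'k::field) \<Rightarrow> (nat \<Rightarrow> 'k) \<Rightarrow> (nat \<Rightarrow> 'k) \<Rightarrow> nat
                     \<Rightarrow> (path \<Rightarrow> 'k)" where
  "rel1 n \<alpha> \<beta> \<gamma> i = (\<lambda>p.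
       basis_path (i, [D ((i + n - 1) mod n), U ((i + n - 1) mod n), U i]) p
     - \<alpha> i * basis_path (i, [U i, D i, U i]) p
     - \<beta> i * basis_path (i, [U i, U ((i + 1) mod n), D ((i + 1) mod n)]) p
     - \<gamma> i * basis_path (i, [U i]) p)"

definition rel2 :: "nat \<Rightarrow> (nat \<Rightarrow> 'k::field) \<Rightarrow> (nat \<Rightarrow> 'k) \<Rightarrow> (nat \<Rightarrow> 'k) \<Rightarrow> nat
                     \<Rightarrow> (path \<Rightarrow> 'k)" where
  "rel2 n \<alpha> \<beta> \<gamma> i = (\<lambda>p.
       basis_path ((i + 1) mod n, [D i, D ((i + n - 1) mod n), U ((i + n - 1) mod n)]) p
     - \<alpha> i * basis_path ((i + 1) mod n, [D i, U i, D i]) p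
     - \<beta> i * basis_path ((i + 1) mod n, [U ((i + 1) mod n), D ((i + 1) mod n), D i]) p
     - \<gamma> i * basis_path ((i + 1) mod n, [D i]) p)"

definition H_rels :: "nat \<Rightarrow> (nat \<Rightarrow> 'k::field) \<Rightarrow> (nat \<Rightarrow> 'k) \<Rightarrow> (nat \<Rightarrow> 'k)
                      \<Rightarrow> (path \<Rightarrow> 'k) set" where
  "H_rels n \<alpha> \<beta> \<gamma> = (\<Union>i\<in>{..<n}. {rel1 n \<alpha> \<beta> \<gamma> i, rel2 n \<alpha> \<beta> \<gamma> i})"

definition H_alg :: "nat \<Rightarrow> (nat \<Rightarrow> 'k::field) \<Rightarrow> (nat \<Rightarrow> 'k) \<Rightarrow> (nat \<Rightarrow> 'k)
                     \<Rightarrow> ((path \<Rightarrow> 'k) set) ring" where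
  "H_alg n \<alpha> \<beta> \<gamma> =
     path_algebra n Quot genideal (path_algebra n) (H_rels n \<alpha> \<beta> \<gamma>)"

definition left_ideal :: "'a set \<Rightarrow> ('a, 'b) ring_scheme \<Rightarrow> bool" where
  "left_ideal J R = (additive_subgroup J R \<and> (\<forall>a\<in>carrier R. \<forall>x\<in>J. a \<otimes>\<^bsub>R\<^esub> x \<in> J))"

definition right_ideal :: "'a set \<Rightarrow> ('a, 'b) ring_scheme \<Rightarrow> bool" where
  "right_ideal J R = (additive_subgroup J R \<and> (\<forall>a\<in>carrier R. \<forall>x\<in>J. x \<otimes>\<^bsub>R\<^esub> a \<in> J))"

definition left_noetherian :: "('a, 'b) ring_scheme \<Rightarrow> bool" where
  "left_noetherian R = (\<forall>I :: nat \<Rightarrow> 'a set.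
      (\<forall>k. left_ideal (I k) R) \<and> (\<forall>k. I k \<subseteq> I (Suc k)) \<longrightarrow> (\<exists>N. \<forall>m\<ge>N. I m = I N))"

definition right_noetherian :: "('a, 'b) ring_scheme \<Rightarrow> bool" where
  "right_noetherian R = (\<forall>I :: nat \<Rightarrow> 'a set.
      (\<forall>k. right_ideal (I k) R) \<and> (\<forall>k. I k \<subseteq> I (Suc k)) \<longrightarrow> (\<exists>N. \<forall>m\<ge>N. I m = I N))"

definition noetherian :: "('a, 'b) ring_scheme \<Rightarrow> bool" where
  "noetherian R = (left_noetherian R \<and> right_noetherian R)"

end

theory Submission
  imports Defs
begin


lemma end_vertex_append:
  "end_vertex n i (as @ bs) = end_vertex n (end_vertex n i as) bs"
  by (induction as arbitrary: i) auto

lemma valid_arrs_append: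
  "valid_arrs n i (as @ bs) = (valid_arrs n i as \<and> valid_arrs n (end_vertex n i as) bs)"
  by (induction as arbitrary: i) auto

lemma arr_tgt_lt: "n \<ge> 1 \<Longrightarrow> arr_idx a < n \<Longrightarrow> arr_tgt n a < n"
  by (cases a) auto

lemma end_vertex_lt:
  "n \<ge> 1 \<Longrightarrow> i < n \<Longrightarrow> valid_arrs n i as \<Longrightarrow> end_vertex n i as < n"
  by (induction as arbitrary: i) (auto simp: arr_tgt_lt)

lemma cat_valid:
  "path_cat n q r = Some p \<Longrightarrow> valid_path n q \<Longrightarrow> valid_path n r \<Longrightarrow> valid_path n p"
  by (auto simp: path_cat_def valid_path_def valid_arrs_append split: if_splits)

lemma cat_assoc:
  "Option.bind (path_cat n q r) (\<lambda>s. path_cat n s t) = Option.bind (path_cat n r t) (\<lambda>s. path_cat n q s)"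
  by (auto simp: path_cat_def end_vertex_append)

lemma swap4:
  "(\<Sum>s\<in>S. \<Sum>t\<in>C. \<Sum>q\<in>A. \<Sum>r\<in>B. F s t q r) = (\<Sum>q\<in>A. \<Sum>r\<in>B. \<Sum>t\<in>C. \<Sum>s\<in>S. F s t q r)"
proof -
  have "(\<Sum>s\<in>S. \<Sum>t\<in>C. \<Sum>q\<in>A. \<Sum>r\<in>B. F s t q r) = (\<Sum>s\<in>S. \<Sum>q\<in>A. \<Sum>t\<in>C. \<Sum>r\<in>B. F s t q r)"
    by (rule sum.cong[OF refl], rule sum.swap)
  also have "\<dots> = (\<Sum>s\<in>S. \<Sum>q\<in>A. \<Sum>r\<in>B. \<Sum>t\<in>C. F s t q r)"
    by (rule sum.cong[OF refl], rule sum.cong[OF refl], rule sum.swap)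
  also have "\<dots> = (\<Sum>q\<in>A. \<Sum>s\<in>S. \<Sum>r\<in>B. \<Sum>t\<in>C. F s t q r)"
    by (rule sum.swap)
  also have "\<dots> = (\<Sum>q\<in>A. \<Sum>r\<in>B. \<Sum>s\<in>S. \<Sum>t\<in>C. F s t q r)"
    by (rule sum.cong[OF refl], rule sum.swap)
  also have "\<dots> = (\<Sum>q\<in>A. \<Sum>r\<in>B. \<Sum>t\<in>C. \<Sum>s\<in>S. F s t q r)"
    by (rule sum.cong[OF refl], rule sum.cong[OF refl], rule sum.swap)
  finally show ?thesis .
qed

lemma swap3:
  "(\<Sum>s\<in>S. \<Sum>r\<in>B. \<Sum>t\<in>C. F s r t) = (\<Sum>r\<in>B. \<Sum>t\<in>C. \<Sum>s\<in>S. F s r t)"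
proof -
  have "(\<Sum>s\<in>S. \<Sum>r\<in>B. \<Sum>t\<in>C. F s r t) = (\<Sum>r\<in>B. \<Sum>s\<in>S. \<Sum>t\<in>C. F s r t)"
    by (rule sum.swap)
  also have "\<dots> = (\<Sum>r\<in>B. \<Sum>t\<in>C. \<Sum>s\<in>S. F s r t)"
    by (rule sum.cong[OF refl], rule sum.swap)
  finally show ?thesis .
qed

lemma sum_if_opt:
  assumes "finite T" "\<And>s. x = Some s \<Longrightarrow> s \<in> T"
  shows "(\<Sum>s\<in>T. if x = Some s \<and> Q s then (Y::'a::comm_monoid_add) else 0)
         = (if Option.bind x (\<lambda>s. if Q s then Some s else None) \<noteq> None then Y else 0)"
proof (cases x)
  case None then show ?thesis by simp
next
  case (Some s0)
  have "(\<Sum>s\<in>T. if x = Some s \<and> Q s then Y else 0) = (\<Sum>s\<in>T. if s = s0 then (if Q s then Y else 0) else 0)"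
    using Some by (intro sum.cong) auto
  also have "\<dots> = (if Q s0 then Y else 0)" using assms Some by (simp add: sum.delta')
  finally show ?thesis using Some by simp
qed


definition conv :: "nat \<Rightarrow> path set \<Rightarrow> path set \<Rightarrow> (path \<Rightarrow> 'k::field) \<Rightarrow> (path \<Rightarrow> 'k) \<Rightarrow> path \<Rightarrow> 'k" where
  "conv n A B f g p = (\<Sum>q\<in>A. \<Sum>r\<in>B. if path_cat n q r = Some p then f q * g r else 0)"

definition Tset :: "nat \<Rightarrow> path set \<Rightarrow> path set \<Rightarrow> path set" where
  "Tset n A B = {p. \<exists>q\<in>A. \<exists>r\<in>B. path_cat n q r = Some p}"

lemma finite_Tset: "finite A \<Longrightarrow> finite B \<Longrightarrow> finite (Tset n A B)"
proof -
  assume "finite A" "finite B"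
  have "Tset n A B \<subseteq> (\<lambda>(q,r). the (path_cat n q r)) ` (A \<times> B)"
    by (force simp: Tset_def)
  then show ?thesis using \<open>finite A\<close> \<open>finite B\<close> by (meson finite_SigmaI finite_imageI finite_subset)
qed

lemma conv_supp: "conv n A B f g p \<noteq> 0 \<Longrightarrow> p \<in> Tset n A B"
proof (rule ccontr)
  assume "conv n A B f g p \<noteq> 0" "p \<notin> Tset n A B"
  then have "\<forall>q\<in>A. \<forall>r\<in>B. path_cat n q r \<noteq> Some p" by (auto simp: Tset_def)
  then have "conv n A B f g p = 0" by (auto simp: conv_def intro!: sum.neutral)
  then show False using \<open>conv n A B f g p \<noteq> 0\<close> by simp
qed

lemma PA_carrier: "f \<in> carrier (path_algebra n) \<longleftrightarrow> finite {p. f p \<noteq> 0} \<and> (\<forall>p. f p \<noteq> 0 \<longrightarrow> valid_path n p)"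
  by (simp add: path_algebra_def)

lemma PA_mult: "f \<otimes>\<^bsub>path_algebra n\<^esub> g = conv n {p. f p \<noteq> 0} {p. g p \<noteq> 0} f g"
  by (simp add: path_algebra_def conv_def fun_eq_iff)

lemma PA_add: "f \<oplus>\<^bsub>path_algebra n\<^esub> g = (\<lambda>p. f p + g p)"
  by (simp add: path_algebra_def)

lemma PA_zero: "\<zero>\<^bsub>path_algebra n\<^esub> = (\<lambda>p. 0)"
  by (simp add: path_algebra_def)

lemma PA_one: "\<one>\<^bsub>path_algebra n\<^esub> = (\<lambda>p. if snd p = [] \<and> fst p < n then 1 else 0)"
  by (simp add: path_algebra_def)

lemma mult_gen:
  assumes "finite A" "finite B" "{p. f p \<noteq> 0} \<subseteq> A" "{p. g p \<noteq> 0} \<subseteq> B"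
  shows "(f \<otimes>\<^bsub>path_algebra n\<^esub> g) p = conv n A B f g p"
proof -
  have fA: "finite {p. f p \<noteq> 0}" "finite {p. g p \<noteq> 0}" using assms finite_subset by auto
  have "conv n {p. f p \<noteq> 0} {p. g p \<noteq> 0} f g p = conv n A {p. g p \<noteq> 0} f g p"
    unfolding conv_def
  proof (rule sum.mono_neutral_left)
    show "\<forall>i\<in>A - {p. f p \<noteq> 0}. (\<Sum>r\<in>{p. g p \<noteq> 0}. if path_cat n i r = Some p then f i * g r else 0) = 0"
    proof
      fix i assume "i \<in> A - {p. f p \<noteq> 0}"
      then have "f i = 0" by simp
      then show "(\<Sum>r\<in>{p. g p \<noteq> 0}. if path_cat n i r = Some p then f i * g r else 0) = 0"
        by (simp only: mult_zero_left if_cancel sum.neutral_const)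
    qed
  qed (use assms fA in auto)
  also have "\<dots> = conv n A B f g p"
    unfolding conv_def by (intro sum.cong refl sum.mono_neutral_left) (use assms fA in auto)
  finally show ?thesis by (simp add: PA_mult)
qed

lemma conv_expand:
  assumes "finite T" "\<And>q r s. q \<in> A \<Longrightarrow> r \<in> B \<Longrightarrow> path_cat n q r = Some s \<Longrightarrow> s \<in> T"
  shows "conv n T C (conv n A B f g) h p
    = (\<Sum>q\<in>A. \<Sum>r\<in>B. \<Sum>t\<in>C. if Option.bind (path_cat n q r) (\<lambda>s. path_cat n s t) = Some p
          then f q * g r * h t else 0)"
proof -
  have "conv n T C (conv n A B f g) h p = (\<Sum>s\<in>T. \<Sum>t\<in>C. if path_cat n s t = Some p then conv n A B f g s * h t else 0)"
    by (simp only: conv_def[of n T C])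
  also have "\<dots>
     = (\<Sum>s\<in>T. \<Sum>t\<in>C. \<Sum>q\<in>A. \<Sum>r\<in>B. if path_cat n q r = Some s \<and> path_cat n s t = Some p then f q * g r * h t else 0)"
    by (intro sum.cong refl) (auto simp: conv_def sum_distrib_right intro!: sum.cong)
  also have "\<dots> = (\<Sum>q\<in>A. \<Sum>r\<in>B. \<Sum>t\<in>C. \<Sum>s\<in>T. if path_cat n q r = Some s \<and> path_cat n s t = Some p then f q * g r * h t else 0)"
    by (rule swap4)
  also have "\<dots> = (\<Sum>q\<in>A. \<Sum>r\<in>B. \<Sum>t\<in>C. if Option.bind (path_cat n q r) (\<lambda>s. path_cat n s t) = Some p
          then f q * g r * h t else 0)"
  proof (intro sum.cong refl)
    fix q r t assume qr: "q \<in> A" "r \<in> B"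
    show "(\<Sum>s\<in>T. if path_cat n q r = Some s \<and> path_cat n s t = Some p then f q * g r * h t else 0) =
        (if Option.bind (path_cat n q r) (\<lambda>s. path_cat n s t) = Some p then f q * g r * h t else 0)"
      by (subst sum_if_opt) (use assms qr in \<open>auto split: Option.bind_splits\<close>)
  qed
  finally show ?thesis .
qed

lemma conv_expand2:
  assumes "finite T" "\<And>r t s. r \<in> B \<Longrightarrow> t \<in> C \<Longrightarrow> path_cat n r t = Some s \<Longrightarrow> s \<in> T"
  shows "conv n A T f (conv n B C g h) p
    = (\<Sum>q\<in>A. \<Sum>r\<in>B. \<Sum>t\<in>C. if Option.bind (path_cat n r t) (\<lambda>s. path_cat n q s) = Some p
          then f q * g r * h t else 0)"
proof -
  have c0: "conv n A T f (conv n B C g h) p = (\<Sum>q\<in>A. \<Sum>s\<in>T. if path_cat n q s = Some p then f q * conv n B C g h s else 0)"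
    by (simp only: conv_def[of n A T])
  have step: "(\<Sum>s\<in>T. if path_cat n q s = Some p then f q * conv n B C g h s else 0)
     = (\<Sum>r\<in>B. \<Sum>t\<in>C. if Option.bind (path_cat n r t) (\<lambda>s. path_cat n q s) = Some p
          then f q * g r * h t else 0)" for q
  proof -
  have "(\<Sum>s\<in>T. if path_cat n q s = Some p then f q * conv n B C g h s else 0)
     = (\<Sum>s\<in>T. \<Sum>r\<in>B. \<Sum>t\<in>C. if path_cat n r t = Some s \<and> path_cat n q s = Some p then f q * g r * h t else 0)"
    by (intro sum.cong refl) (auto simp: conv_def sum_distrib_left mult.assoc intro!: sum.cong)
  also have "\<dots> = (\<Sum>r\<in>B. \<Sum>t\<in>C. \<Sum>s\<in>T. if path_cat n r t = Some s \<and> path_cat n q s = Some p then f q * g r * h t else 0)"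
    by (rule swap3)
  also have "\<dots> = (\<Sum>r\<in>B. \<Sum>t\<in>C. if Option.bind (path_cat n r t) (\<lambda>s. path_cat n q s) = Some p
          then f q * g r * h t else 0)"
  proof (intro sum.cong refl)
    fix r t assume rt: "r \<in> B" "t \<in> C"
    show "(\<Sum>s\<in>T. if path_cat n r t = Some s \<and> path_cat n q s = Some p then f q * g r * h t else 0) =
        (if Option.bind (path_cat n r t) (\<lambda>s. path_cat n q s) = Some p then f q * g r * h t else 0)"
      by (subst sum_if_opt) (use assms rt in \<open>auto split: Option.bind_splits\<close>)
  qed
  finally show ?thesis .
  qed
  show ?thesis unfolding c0 by (intro sum.cong refl step)
qed


lemma supp_add_sub: "{p. f p + g p \<noteq> (0::'k::field)} \<subseteq> {p. f p \<noteq> 0} \<union> {p. g p \<noteq> 0}"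
  by auto

lemma PA_mult_closed:
  assumes "f \<in> carrier (path_algebra n)" "g \<in> carrier (path_algebra n)"
  shows "f \<otimes>\<^bsub>path_algebra n\<^esub> g \<in> carrier (path_algebra n)"
proof -
  let ?A = "{p. f p \<noteq> 0}" and ?B = "{p. g p \<noteq> 0}"
  have fin: "finite ?A" "finite ?B" using assms by (auto simp: PA_carrier)
  have sub: "{p. (f \<otimes>\<^bsub>path_algebra n\<^esub> g) p \<noteq> 0} \<subseteq> Tset n ?A ?B"
    using conv_supp by (auto simp: PA_mult)
  moreover have "finite (Tset n ?A ?B)" using fin finite_Tset by blast
  moreover have "valid_path n p" if pT: "p \<in> Tset n ?A ?B" for p
  proof -
    obtain q r where "f q \<noteq> 0" "g r \<noteq> 0" "path_cat n q r = Some p" using pT by (auto simp: Tset_def)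
    moreover have "valid_path n q" "valid_path n r" using calculation assms unfolding PA_carrier by blast+
    ultimately show ?thesis using cat_valid by blast
  qed
  ultimately show ?thesis by (auto simp: PA_carrier intro: finite_subset)
qed

lemma PA_assoc:
  assumes "f \<in> carrier (path_algebra n)" "g \<in> carrier (path_algebra n)" "h \<in> carrier (path_algebra n)"
  shows "(f \<otimes>\<^bsub>path_algebra n\<^esub> g) \<otimes>\<^bsub>path_algebra n\<^esub> h = f \<otimes>\<^bsub>path_algebra n\<^esub> (g \<otimes>\<^bsub>path_algebra n\<^esub> h)"
proof
  fix p
  let ?A = "{p. f p \<noteq> 0}" and ?B = "{p. g p \<noteq> 0}" and ?C = "{p. h p \<noteq> 0}"
  have fin: "finite ?A" "finite ?B" "finite ?C" using assms by (auto simp: PA_carrier)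
  have fT: "finite (Tset n ?A ?B)" "finite (Tset n ?B ?C)" using fin finite_Tset by auto
  have s1: "{p. (f \<otimes>\<^bsub>path_algebra n\<^esub> g) p \<noteq> 0} \<subseteq> Tset n ?A ?B"
    using conv_supp by (auto simp: PA_mult)
  have s2: "{p. (g \<otimes>\<^bsub>path_algebra n\<^esub> h) p \<noteq> 0} \<subseteq> Tset n ?B ?C"
    using conv_supp by (auto simp: PA_mult)
  have "((f \<otimes>\<^bsub>path_algebra n\<^esub> g) \<otimes>\<^bsub>path_algebra n\<^esub> h) p
      = conv n (Tset n ?A ?B) ?C (f \<otimes>\<^bsub>path_algebra n\<^esub> g) h p"
    by (rule mult_gen) (use fin s1 fT in auto)
  also have "\<dots> = (\<Sum>q\<in>?A. \<Sum>r\<in>?B. \<Sum>t\<in>?C. if Option.bind (path_cat n q r) (\<lambda>s. path_cat n s t) = Some p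
          then f q * g r * h t else 0)"
    unfolding PA_mult by (rule conv_expand) (use fin fT in \<open>auto simp: Tset_def\<close>)
  also have "\<dots> = (\<Sum>q\<in>?A. \<Sum>r\<in>?B. \<Sum>t\<in>?C. if Option.bind (path_cat n r t) (\<lambda>s. path_cat n q s) = Some p
          then f q * g r * h t else 0)"
    by (simp only: cat_assoc)
  also have "\<dots> = conv n ?A (Tset n ?B ?C) f (g \<otimes>\<^bsub>path_algebra n\<^esub> h) p"
    unfolding PA_mult by (rule conv_expand2[symmetric]) (use fin fT in \<open>auto simp: Tset_def\<close>)
  also have "\<dots> = (f \<otimes>\<^bsub>path_algebra n\<^esub> (g \<otimes>\<^bsub>path_algebra n\<^esub> h)) p"
    by (rule mult_gen[symmetric]) (use fin s2 fT in auto)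
  finally show "((f \<otimes>\<^bsub>path_algebra n\<^esub> g) \<otimes>\<^bsub>path_algebra n\<^esub> h) p = (f \<otimes>\<^bsub>path_algebra n\<^esub> (g \<otimes>\<^bsub>path_algebra n\<^esub> h)) p" .
qed


lemma PA_one_supp: "{p. (\<one>\<^bsub>path_algebra n\<^esub>::path\<Rightarrow>'k::field) p \<noteq> 0} \<subseteq> (\<lambda>j. (j, [])) ` {..<n}"
  by (auto simp: PA_one)

lemma PA_one_val: "j < n \<Longrightarrow> (\<one>\<^bsub>path_algebra n\<^esub>::path\<Rightarrow>'k::field) (j, []) = 1"
  by (simp add: PA_one)

lemma cat_triv_left: "path_cat n (j, []) r = Some p \<longleftrightarrow> r = p \<and> fst p = j"
  by (cases r; cases p) (auto simp: path_cat_def)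

lemma cat_triv_right: "path_cat n q (j, []) = Some p \<longleftrightarrow> q = p \<and> end_vertex n (fst q) (snd q) = j"
  by (cases q; cases p) (auto simp: path_cat_def)

lemma PA_l_one:
  assumes "f \<in> carrier (path_algebra n)"
  shows "\<one>\<^bsub>path_algebra n\<^esub> \<otimes>\<^bsub>path_algebra n\<^esub> f = (f::path\<Rightarrow>'k::field)"
proof
  fix p
  let ?B = "{p. f p \<noteq> 0}"
  have fin: "finite ?B" using assms by (auto simp: PA_carrier)
  have "(\<one>\<^bsub>path_algebra n\<^esub> \<otimes>\<^bsub>path_algebra n\<^esub> f) p = conv n ((\<lambda>j. (j, [])) ` {..<n}) ?B \<one>\<^bsub>path_algebra n\<^esub> f p"
    by (rule mult_gen) (use fin PA_one_supp in auto)
  also have "\<dots> = (\<Sum>j\<in>{..<n}. \<Sum>r\<in>?B. if path_cat n (j, []) r = Some p then \<one>\<^bsub>path_algebra n\<^esub> (j, []) * f r else 0)"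
    unfolding conv_def by (subst sum.reindex) (auto simp: inj_on_def)
  also have "\<dots> = (\<Sum>j\<in>{..<n}. if fst p = j then (if p \<in> ?B then f p else 0) else 0)"
  proof (intro sum.cong refl)
    fix j assume j: "j \<in> {..<n}"
    have "(\<Sum>r\<in>?B. if path_cat n (j, []) r = Some p then \<one>\<^bsub>path_algebra n\<^esub> (j, []) * f r else 0)
        = (\<Sum>r\<in>?B. if r = p then (if fst p = j then f r else 0) else 0)"
      using j by (intro sum.cong refl) (auto simp: cat_triv_left PA_one_val)
    also have "\<dots> = (if fst p = j then (if p \<in> ?B then f p else 0) else 0)"
      using fin by (simp add: sum.delta)
    finally show "(\<Sum>r\<in>?B. if path_cat n (j, []) r = Some p then \<one>\<^bsub>path_algebra n\<^esub> (j, []) * f r else 0)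
        = (if fst p = j then (if p \<in> ?B then f p else 0) else 0)" .
  qed
  also have "\<dots> = f p"
  proof (cases "f p = 0")
    case True then show ?thesis by simp
  next
    case False
    have "valid_path n p" using assms False unfolding PA_carrier by blast
    then have "fst p < n" by (simp add: valid_path_def)
    then show ?thesis using False by (simp add: sum.delta)
  qed
  finally show "(\<one>\<^bsub>path_algebra n\<^esub> \<otimes>\<^bsub>path_algebra n\<^esub> f) p = f p" .
qed

lemma PA_r_one:
  assumes "f \<in> carrier (path_algebra n)" "n \<ge> 1"
  shows "f \<otimes>\<^bsub>path_algebra n\<^esub> \<one>\<^bsub>path_algebra n\<^esub> = (f::path\<Rightarrow>'k::field)"
proof
  fix p
  let ?A = "{p. f p \<noteq> 0}"
  have fin: "finite ?A" using assms by (auto simp: PA_carrier)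
  have "(f \<otimes>\<^bsub>path_algebra n\<^esub> \<one>\<^bsub>path_algebra n\<^esub>) p = conv n ?A ((\<lambda>j. (j, [])) ` {..<n}) f \<one>\<^bsub>path_algebra n\<^esub> p"
    by (rule mult_gen) (use fin PA_one_supp in auto)
  also have "\<dots> = (\<Sum>q\<in>?A. \<Sum>j\<in>{..<n}. if path_cat n q (j, []) = Some p then f q * \<one>\<^bsub>path_algebra n\<^esub> (j, []) else 0)"
    unfolding conv_def by (intro sum.cong refl, subst sum.reindex) (auto simp: inj_on_def)
  also have "\<dots> = (\<Sum>q\<in>?A. if q = p then f q else 0)"
  proof (intro sum.cong refl)
    fix q assume q: "q \<in> ?A"
    have "valid_path n q" using assms q unfolding PA_carrier by blast
    then have e: "end_vertex n (fst q) (snd q) < n"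
      using assms by (intro end_vertex_lt) (auto simp: valid_path_def)
    have "(\<Sum>j\<in>{..<n}. if path_cat n q (j, []) = Some p then f q * \<one>\<^bsub>path_algebra n\<^esub> (j, []) else 0)
        = (\<Sum>j\<in>{..<n}. if j = end_vertex n (fst q) (snd q) then (if q = p then f q else 0) else 0)"
      by (intro sum.cong refl) (auto simp: cat_triv_right PA_one_val)
    also have "\<dots> = (if q = p then f q else 0)" using e by (simp add: sum.delta')
    finally show "(\<Sum>j\<in>{..<n}. if path_cat n q (j, []) = Some p then f q * \<one>\<^bsub>path_algebra n\<^esub> (j, []) else 0)
        = (if q = p then f q else 0)" .
  qed
  also have "\<dots> = f p" using fin by (simp add: sum.delta')
  finally show "(f \<otimes>\<^bsub>path_algebra n\<^esub> \<one>\<^bsub>path_algebra n\<^esub>) p = f p" .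
qed

lemma if_add0: "(if c then a + b else 0) = (if c then a else 0) + (if c then b else (0::'a::comm_monoid_add))"
  by simp

lemma conv_add_left: "conv n A B (\<lambda>p. f p + g p) h p = conv n A B f h p + conv n A B g h p"
  unfolding conv_def sum.distrib[symmetric] by (intro sum.cong refl) (simp add: distrib_right)

lemma conv_add_right: "conv n A B h (\<lambda>p. f p + g p) p = conv n A B h f p + conv n A B h g p"
  unfolding conv_def sum.distrib[symmetric] by (intro sum.cong refl) (simp add: distrib_left)


lemma PA_add_closed:
  assumes "f \<in> carrier (path_algebra n)" "g \<in> carrier (path_algebra n)"
  shows "(\<lambda>p. f p + g p) \<in> carrier (path_algebra n :: (path \<Rightarrow> 'k::field) ring)"
proof -
  have f1: "finite {p. f p \<noteq> 0}" "finite {p. g p \<noteq> 0}" using assms by (simp_all add: PA_carrier)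
  have v: "\<forall>p. f p \<noteq> 0 \<longrightarrow> valid_path n p" "\<forall>p. g p \<noteq> 0 \<longrightarrow> valid_path n p" using assms by (simp_all add: PA_carrier)
  have "finite {p. f p + g p \<noteq> 0}"
    by (rule finite_subset[OF supp_add_sub]) (use f1 in simp)
  moreover have "\<forall>p. f p + g p \<noteq> 0 \<longrightarrow> valid_path n p"
  proof (intro allI impI)
    fix p assume "f p + g p \<noteq> 0"
    then have "f p \<noteq> 0 \<or> g p \<noteq> 0" by auto
    then show "valid_path n p" using v by blast
  qed
  ultimately show ?thesis by (simp add: PA_carrier)
qed

lemma PA_one_closed: "\<one>\<^bsub>path_algebra n\<^esub> \<in> carrier (path_algebra n :: (path \<Rightarrow> 'k::field) ring)"
  unfolding PA_carrier
proof (intro conjI allI impI)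
  show "finite {p. (\<one>\<^bsub>path_algebra n\<^esub>::path \<Rightarrow> 'k) p \<noteq> 0}"
    using PA_one_supp by (rule finite_subset) simp
  fix p assume "(\<one>\<^bsub>path_algebra n\<^esub>::path \<Rightarrow> 'k) p \<noteq> 0"
  then show "valid_path n p" by (cases p) (auto simp: PA_one valid_path_def split: if_splits)
qed

lemma PA_l_distr:
  assumes "x \<in> carrier (path_algebra n)" "y \<in> carrier (path_algebra n)" "z \<in> carrier (path_algebra n)"
  shows "(x \<oplus>\<^bsub>path_algebra n\<^esub> y) \<otimes>\<^bsub>path_algebra n\<^esub> z
     = (x \<otimes>\<^bsub>path_algebra n\<^esub> z) \<oplus>\<^bsub>path_algebra n\<^esub> (y \<otimes>\<^bsub>path_algebra n\<^esub> (z::path\<Rightarrow>'k::field))"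
proof
  fix p
  let ?A = "{p. x p \<noteq> 0} \<union> {p. y p \<noteq> 0}" and ?B = "{p. z p \<noteq> 0}"
  have fin: "finite ?A" "finite ?B" using assms by (auto simp: PA_carrier)
  have "((x \<oplus>\<^bsub>path_algebra n\<^esub> y) \<otimes>\<^bsub>path_algebra n\<^esub> z) p = conv n ?A ?B (\<lambda>p. x p + y p) z p"
    unfolding PA_add by (rule mult_gen) (use fin supp_add_sub in auto)
  also have "\<dots> = conv n ?A ?B x z p + conv n ?A ?B y z p" by (rule conv_add_left)
  also have "\<dots> = (x \<otimes>\<^bsub>path_algebra n\<^esub> z) p + (y \<otimes>\<^bsub>path_algebra n\<^esub> z) p"
    by (subst (1 2) mult_gen[where A="?A" and B="?B"]) (use fin in auto)
  finally show "((x \<oplus>\<^bsub>path_algebra n\<^esub> y) \<otimes>\<^bsub>path_algebra n\<^esub> z) p = ((x \<otimes>\<^bsub>path_algebra n\<^esub> z) \<oplus>\<^bsub>path_algebra n\<^esub> (y \<otimes>\<^bsub>path_algebra n\<^esub> z)) p"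
    by (simp add: PA_add)
qed

lemma PA_r_distr:
  assumes "x \<in> carrier (path_algebra n)" "y \<in> carrier (path_algebra n)" "z \<in> carrier (path_algebra n)"
  shows "z \<otimes>\<^bsub>path_algebra n\<^esub> (x \<oplus>\<^bsub>path_algebra n\<^esub> y)
     = (z \<otimes>\<^bsub>path_algebra n\<^esub> x) \<oplus>\<^bsub>path_algebra n\<^esub> (z \<otimes>\<^bsub>path_algebra n\<^esub> (y::path\<Rightarrow>'k::field))"
proof
  fix p
  let ?A = "{p. x p \<noteq> 0} \<union> {p. y p \<noteq> 0}" and ?B = "{p. z p \<noteq> 0}"
  have fin: "finite ?A" "finite ?B" using assms by (auto simp: PA_carrier)
  have "(z \<otimes>\<^bsub>path_algebra n\<^esub> (x \<oplus>\<^bsub>path_algebra n\<^esub> y)) p = conv n ?B ?A z (\<lambda>p. x p + y p) p"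
    unfolding PA_add by (rule mult_gen) (use fin supp_add_sub in auto)
  also have "\<dots> = conv n ?B ?A z x p + conv n ?B ?A z y p" by (rule conv_add_right)
  also have "\<dots> = (z \<otimes>\<^bsub>path_algebra n\<^esub> x) p + (z \<otimes>\<^bsub>path_algebra n\<^esub> y) p"
    by (subst (1 2) mult_gen[where A="?B" and B="?A"]) (use fin in auto)
  finally show "(z \<otimes>\<^bsub>path_algebra n\<^esub> (x \<oplus>\<^bsub>path_algebra n\<^esub> y)) p = ((z \<otimes>\<^bsub>path_algebra n\<^esub> x) \<oplus>\<^bsub>path_algebra n\<^esub> (z \<otimes>\<^bsub>path_algebra n\<^esub> y)) p"
    by (simp add: PA_add)
qed

lemma PA_ring:
  assumes "n \<ge> 1"
  shows "ring (path_algebra n :: (path \<Rightarrow> 'k::field) ring)"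
proof (rule ringI)
  show "abelian_group (path_algebra n :: (path \<Rightarrow> 'k::field) ring)"
  proof (rule abelian_groupI)
    fix x assume x: "x \<in> carrier (path_algebra n :: (path \<Rightarrow> 'k::field) ring)"
    show "\<exists>y\<in>carrier (path_algebra n). y \<oplus>\<^bsub>path_algebra n\<^esub> x = \<zero>\<^bsub>path_algebra n\<^esub>"
    proof (intro bexI)
      show "(\<lambda>p. - x p) \<oplus>\<^bsub>path_algebra n\<^esub> x = \<zero>\<^bsub>path_algebra n\<^esub>" by (simp add: PA_add PA_zero)
      show "(\<lambda>p. - x p) \<in> carrier (path_algebra n)" using x by (simp add: PA_carrier)
    qed
  next
    show "\<zero>\<^bsub>path_algebra n\<^esub> \<in> carrier (path_algebra n :: (path \<Rightarrow> 'k::field) ring)"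
      by (simp add: PA_carrier PA_zero)
  next
    fix x y assume "x \<in> carrier (path_algebra n :: (path \<Rightarrow> 'k::field) ring)" "y \<in> carrier (path_algebra n :: (path \<Rightarrow> 'k::field) ring)"
    then show "x \<oplus>\<^bsub>path_algebra n\<^esub> y \<in> carrier (path_algebra n)"
      unfolding PA_add by (rule PA_add_closed)
  qed (simp_all add: PA_add PA_zero ac_simps)
  show "monoid (path_algebra n :: (path \<Rightarrow> 'k::field) ring)"
  proof (rule monoidI)
    fix x y z assume "x \<in> carrier (path_algebra n :: (path \<Rightarrow> 'k::field) ring)" "y \<in> carrier (path_algebra n :: (path \<Rightarrow> 'k::field) ring)"
      "z \<in> carrier (path_algebra n :: (path \<Rightarrow> 'k::field) ring)"
    then show "x \<otimes>\<^bsub>path_algebra n\<^esub> y \<otimes>\<^bsub>path_algebra n\<^esub> z = x \<otimes>\<^bsub>path_algebra n\<^esub> (y \<otimes>\<^bsub>path_algebra n\<^esub> z)"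
      by (rule PA_assoc)
  next
    fix x assume "x \<in> carrier (path_algebra n :: (path \<Rightarrow> 'k::field) ring)"
    then show "x \<otimes>\<^bsub>path_algebra n\<^esub> \<one>\<^bsub>path_algebra n\<^esub> = x" using assms by (rule PA_r_one)
  qed (simp_all add: PA_mult_closed PA_one_closed PA_l_one)
qed (simp_all add: PA_l_distr PA_r_distr)



lemma add_subgroupI':
  fixes R (structure)
  assumes "ring R" "S \<subseteq> carrier R" "\<zero> \<in> S" "\<And>x y. x \<in> S \<Longrightarrow> y \<in> S \<Longrightarrow> x \<oplus> y \<in> S"
    "\<And>x. x \<in> S \<Longrightarrow> \<ominus> x \<in> S"
  shows "additive_subgroup S R"
  apply (rule additive_subgroupI)
  apply (rule subgroup.intro)
  using assms by (simp_all add: a_inv_def[symmetric])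

lemma PA_neg:
  assumes "n \<ge> 1" "f \<in> carrier (path_algebra n)"
  shows "\<ominus>\<^bsub>path_algebra n\<^esub> f = (\<lambda>p. - (f p :: 'k::field))"
proof -
  interpret R: ring "path_algebra n :: (path \<Rightarrow> 'k) ring" by (rule PA_ring[OF assms(1)])
  show ?thesis
  proof (rule R.minus_equality)
    show "(\<lambda>p. - f p) \<oplus>\<^bsub>path_algebra n\<^esub> f = \<zero>\<^bsub>path_algebra n\<^esub>" by (simp add: PA_add PA_zero)
    show "(\<lambda>p. - f p) \<in> carrier (path_algebra n)" using assms(2) by (simp add: PA_carrier)
  qed (rule assms(2))
qed

locale rep =
  fixes n :: nat and i :: nat and \<alpha> \<beta> \<gamma> :: "nat \<Rightarrow> 'k::field"
  assumes n1: "n \<ge> 1" and i_lt: "i < n" and bi: "\<beta> i = 0"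
begin

definition vert :: "nat \<Rightarrow> nat" where
  "vert m = nat ((int i - int m) mod int n)"

lemma vert_lt: "vert m < n"
  using n1 by (simp add: vert_def nat_less_iff)

lemma vert_0: "vert 0 = i"
  using i_lt by (simp add: vert_def)

lemma vert_Suc: "vert (Suc m) = (vert m + n - 1) mod n"
proof -
  have "int ((vert m + n - 1) mod n) = (int (vert m) + int n - 1) mod int n"
    using n1 by (simp add: zmod_int of_nat_diff)
  also have "\<dots> = ((int i - int m) mod int n + int n - 1) mod int n"
    using n1 by (simp add: vert_def)
  also have "\<dots> = ((int i - int m) + (int n - 1)) mod int n"
    by (metis (no_types) add.commute add_diff_eq mod_add_right_eq)
  also have "\<dots> = ((int i - int (Suc m)) + int n) mod int n"
    by (simp add: algebra_simps)
  also have "\<dots> = (int i - int (Suc m)) mod int n"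
    by simp
  finally show ?thesis unfolding vert_def by (metis nat_int)
qed

lemma vert_pred: "vert m = (vert (Suc m) + 1) mod n"
proof -
  have "int ((vert (Suc m) + 1) mod n) = (int (vert (Suc m)) + 1) mod int n"
    by (simp add: zmod_int add.commute)
  also have "\<dots> = ((int i - int (Suc m)) mod int n + 1) mod int n"
    using n1 by (simp add: vert_def)
  also have "\<dots> = ((int i - int (Suc m)) + 1) mod int n"
    by (metis mod_add_left_eq)
  also have "\<dots> = (int i - int m) mod int n"
    by simp
  finally show ?thesis unfolding vert_def by (metis nat_int)
qed


fun cc :: "nat \<Rightarrow> 'k" where
  "cc 0 = \<gamma> i + 1"
| "cc (Suc 0) = \<alpha> (vert 1) * cc 0 + \<gamma> (vert 1)"
| "cc (Suc (Suc m)) = \<alpha> (vert (Suc (Suc m))) * cc (Suc m) + \<beta> (vert (Suc (Suc m))) * cc m + \<gamma> (vert (Suc (Suc m)))"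

definition cprev :: "nat \<Rightarrow> 'k" where
  "cprev m = (if m = 0 then 0 else cc (m - 1))"

lemma cc_rec: "cc (Suc m) = \<alpha> (vert (Suc m)) * cc m + \<beta> (vert (Suc m)) * cprev m + \<gamma> (vert (Suc m))"
  by (cases m) (simp_all add: cprev_def)

fun scA :: "arr \<Rightarrow> nat \<Rightarrow> 'k" where
  "scA (U j) m = (if vert m = (j + 1) mod n then cc m else 0)"
| "scA (D j) m = (if vert m = j \<and> 0 < m then 1 else 0)"

fun idxA :: "arr \<Rightarrow> nat \<Rightarrow> nat" where
  "idxA (U j) m = Suc m"
| "idxA (D j) m = m - 1"

fun idxL :: "arr list \<Rightarrow> nat \<Rightarrow> nat" where
  "idxL [] m = m"
| "idxL (a # as) m = idxA a (idxL as m)"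

fun scL :: "arr list \<Rightarrow> nat \<Rightarrow> 'k" where
  "scL [] m = 1"
| "scL (a # as) m = scL as m * scA a (idxL as m)"

definition idxP :: "path \<Rightarrow> nat \<Rightarrow> nat" where
  "idxP p m = idxL (snd p) m"

definition scP :: "path \<Rightarrow> nat \<Rightarrow> 'k" where
  "scP p m = (if vert (idxL (snd p) m) = fst p then scL (snd p) m else 0)"

definition Kt :: "path \<Rightarrow> nat \<Rightarrow> nat \<Rightarrow> 'k" where
  "Kt p m m' = (if idxP p m = m' then scP p m else 0)"

lemma scA_nz: "scA a x \<noteq> 0 \<Longrightarrow> vert x = arr_tgt n a"
  by (cases a) (auto split: if_splits)

lemma idxL_append: "idxL (as @ bs) m = idxL as (idxL bs m)"
  by (induction as) auto

lemma scL_append: "scL (as @ bs) m = scL bs m * scL as (idxL bs m)"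
  by (induction as) (auto simp: idxL_append)

lemma scL_vert:
  "valid_arrs n j as \<Longrightarrow> scL as m \<noteq> 0 \<Longrightarrow> vert (idxL as m) = j \<Longrightarrow> vert m = end_vertex n j as"
proof (induction as arbitrary: j)
  case Nil then show ?case by simp
next
  case (Cons a as)
  have "scL as m \<noteq> 0" "scA a (idxL as m) \<noteq> 0" using Cons.prems(2) by auto
  then have "vert (idxL as m) = arr_tgt n a" using scA_nz by blast
  then have "vert m = end_vertex n (arr_tgt n a) as"
    using Cons.IH[of "arr_tgt n a"] Cons.prems(1) \<open>scL as m \<noteq> 0\<close> by simp
  then show ?case by simp
qed

lemma comp_idx: "path_cat n q r = Some p \<Longrightarrow> idxP p m = idxP q (idxP r m)"
  by (auto simp: path_cat_def idxP_def idxL_append split: if_splits)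

lemma comp_sc:
  assumes "valid_path n q"
  shows "scP r m * scP q (idxP r m) = (case path_cat n q r of None \<Rightarrow> 0 | Some p \<Rightarrow> scP p m)"
proof -
  obtain j as where q: "q = (j, as)" by (cases q)
  obtain j' bs where r: "r = (j', bs)" by (cases r)
  have va: "valid_arrs n j as" using assms q by (simp add: valid_path_def)
  let ?m1 = "idxL bs m"
  show ?thesis
  proof (cases "end_vertex n j as = j'")
    case True
    have "scP r m * scP q (idxP r m) =
        (if vert ?m1 = j' then scL bs m else 0) * (if vert (idxL as ?m1) = j then scL as ?m1 else 0)"
      by (simp add: scP_def idxP_def q r)
    also have "\<dots> = (if vert (idxL as ?m1) = j then scL bs m * scL as ?m1 else 0)"
      using scL_vert[OF va, of ?m1] True by auto
    also have "\<dots> = scP (j, as @ bs) m"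
      by (simp add: scP_def idxL_append scL_append)
    finally show ?thesis using True by (simp add: path_cat_def q r)
  next
    case False
    have "scP r m * scP q (idxP r m) =
        (if vert ?m1 = j' then scL bs m else 0) * (if vert (idxL as ?m1) = j then scL as ?m1 else 0)"
      by (simp add: scP_def idxP_def q r)
    also have "\<dots> = 0"
      using scL_vert[OF va, of ?m1] False by auto
    finally show ?thesis using False by (simp add: path_cat_def q r)
  qed
qed

lemma comp_Kt:
  assumes "valid_path n q"
  shows "scP r m * Kt q (idxP r m) m' = (case path_cat n q r of None \<Rightarrow> 0 | Some p \<Rightarrow> Kt p m m')"
proof (cases "path_cat n q r")
  case None then show ?thesis using comp_sc[OF assms, of r m] by (simp add: Kt_def)
next
  case (Some p) then show ?thesis using comp_sc[OF assms, of r m] comp_idx[OF Some, of m]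
    by (auto simp: Kt_def mult.commute)
qed


definition Phi :: "(path \<Rightarrow> 'k) \<Rightarrow> nat \<Rightarrow> nat \<Rightarrow> 'k" where
  "Phi f m m' = (\<Sum>p\<in>{p. f p \<noteq> 0}. f p * Kt p m m')"

lemma Phi_gen:
  assumes "finite S" "{p. f p \<noteq> 0} \<subseteq> S"
  shows "Phi f m m' = (\<Sum>p\<in>S. f p * Kt p m m')"
  unfolding Phi_def
proof (rule sum.mono_neutral_left)
  show "\<forall>p\<in>S - {p. f p \<noteq> 0}. f p * Kt p m m' = 0" by auto
qed (use assms in auto)

lemma sum_opt:
  assumes "finite T" "\<And>s. x = Some s \<Longrightarrow> s \<in> T"
  shows "(\<Sum>p\<in>T. if x = Some p then F p else 0) = (case x of None \<Rightarrow> 0 | Some p \<Rightarrow> (F p :: 'a::comm_monoid_add))"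
proof (cases x)
  case None then show ?thesis by simp
next
  case (Some s0)
  have "(\<Sum>p\<in>T. if x = Some p then F p else 0) = (\<Sum>p\<in>T. if p = s0 then F p else 0)"
    using Some by (intro sum.cong) auto
  also have "\<dots> = F s0" using assms Some by (simp add: sum.delta')
  finally show ?thesis using Some by simp
qed

lemma Phi_mult:
  assumes f: "f \<in> carrier (path_algebra n)" and g: "g \<in> carrier (path_algebra n)"
  shows "Phi (f \<otimes>\<^bsub>path_algebra n\<^esub> g) m m'' =
     (\<Sum>m'\<in>(\<lambda>r. idxP r m) ` {p. g p \<noteq> 0}. Phi g m m' * Phi f m' m'')"
proof -
  let ?A = "{p. f p \<noteq> 0}" and ?B = "{p. g p \<noteq> 0}"
  let ?T = "Tset n ?A ?B" and ?M = "(\<lambda>r. idxP r m) ` ?B"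
  have fin: "finite ?A" "finite ?B" using assms by (auto simp: PA_carrier)
  have fT: "finite ?T" using fin finite_Tset by blast
  have fM: "finite ?M" using fin by blast
  have vA: "valid_path n q" if "q \<in> ?A" for q using f that unfolding PA_carrier by blast
  have s1: "{p. (f \<otimes>\<^bsub>path_algebra n\<^esub> g) p \<noteq> 0} \<subseteq> ?T"
    using conv_supp by (auto simp: PA_mult)
  define G where "G q r = f q * g r * (case path_cat n q r of None \<Rightarrow> 0 | Some p \<Rightarrow> Kt p m m'')" for q r
  have "Phi (f \<otimes>\<^bsub>path_algebra n\<^esub> g) m m'' = (\<Sum>p\<in>?T. conv n ?A ?B f g p * Kt p m m'')"
    by (subst Phi_gen[OF fT s1]) (simp add: PA_mult)
  also have "\<dots> = (\<Sum>p\<in>?T. \<Sum>q\<in>?A. \<Sum>r\<in>?B. if path_cat n q r = Some p then f q * g r * Kt p m m'' else 0)"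
    unfolding conv_def sum_distrib_right by (intro sum.cong refl) auto
  also have "\<dots> = (\<Sum>q\<in>?A. \<Sum>r\<in>?B. \<Sum>p\<in>?T. if path_cat n q r = Some p then f q * g r * Kt p m m'' else 0)"
    by (rule swap3)
  also have "\<dots> = (\<Sum>q\<in>?A. \<Sum>r\<in>?B. G q r)"
  proof (intro sum.cong refl)
    fix q r assume qr: "q \<in> ?A" "r \<in> ?B"
    show "(\<Sum>p\<in>?T. if path_cat n q r = Some p then f q * g r * Kt p m m'' else 0) = G q r"
    proof -
      have "\<And>s. path_cat n q r = Some s \<Longrightarrow> s \<in> ?T" using qr unfolding Tset_def by blast
      then show ?thesis unfolding G_def by (subst sum_opt[OF fT]) (auto split: option.splits)
    qed
  qed
  finally have L: "Phi (f \<otimes>\<^bsub>path_algebra n\<^esub> g) m m'' = (\<Sum>q\<in>?A. \<Sum>r\<in>?B. G q r)" .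
  have "(\<Sum>m'\<in>?M. Phi g m m' * Phi f m' m'') =
      (\<Sum>m'\<in>?M. \<Sum>r\<in>?B. \<Sum>q\<in>?A. (g r * Kt r m m') * (f q * Kt q m' m''))"
    unfolding Phi_def sum_product by (rule refl)
  also have "\<dots> = (\<Sum>r\<in>?B. \<Sum>q\<in>?A. \<Sum>m'\<in>?M. (g r * Kt r m m') * (f q * Kt q m' m''))"
    by (rule swap3)
  also have "\<dots> = (\<Sum>r\<in>?B. \<Sum>q\<in>?A. G q r)"
  proof (intro sum.cong refl)
    fix r q assume rq: "r \<in> ?B" "q \<in> ?A"
    have "(\<Sum>m'\<in>?M. (g r * Kt r m m') * (f q * Kt q m' m''))
        = (\<Sum>m'\<in>?M. if m' = idxP r m then g r * scP r m * (f q * Kt q m' m'') else 0)"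
      by (intro sum.cong refl) (auto simp: Kt_def)
    also have "\<dots> = g r * scP r m * (f q * Kt q (idxP r m) m'')"
      using fM rq by (simp add: sum.delta')
    also have "\<dots> = f q * g r * (scP r m * Kt q (idxP r m) m'')"
      by (simp add: ac_simps)
    also have "\<dots> = G q r"
      unfolding G_def using comp_Kt[OF vA[OF rq(2)], of r m m''] by simp
    finally show "(\<Sum>m'\<in>?M. (g r * Kt r m m') * (f q * Kt q m' m'')) = G q r" .
  qed
  also have "\<dots> = (\<Sum>q\<in>?A. \<Sum>r\<in>?B. G q r)"
    by (rule sum.swap)
  finally show ?thesis using L by simp
qed

lemma Phi_add:
  assumes "f \<in> carrier (path_algebra n)" "g \<in> carrier (path_algebra n)"
  shows "Phi (f \<oplus>\<^bsub>path_algebra n\<^esub> g) m m' = Phi f m m' + Phi g m m'"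
proof -
  let ?S = "{p. f p \<noteq> 0} \<union> {p. g p \<noteq> 0}"
  have fin: "finite ?S" using assms by (auto simp: PA_carrier)
  have "Phi (f \<oplus>\<^bsub>path_algebra n\<^esub> g) m m' = (\<Sum>p\<in>?S. (f p + g p) * Kt p m m')"
    unfolding PA_add by (rule Phi_gen[OF fin supp_add_sub])
  also have "\<dots> = (\<Sum>p\<in>?S. f p * Kt p m m') + (\<Sum>p\<in>?S. g p * Kt p m m')"
    by (simp add: distrib_right sum.distrib)
  also have "\<dots> = Phi f m m' + Phi g m m'"
    by (subst (1 2) Phi_gen[OF fin]) auto
  finally show ?thesis .
qed

lemma Phi_neg:
  "Phi (\<lambda>p. - f p) m m' = - Phi f m m'"
  by (simp add: Phi_def sum_negf)

lemma Phi_zero: "Phi (\<lambda>p. 0) m m' = 0"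
  by (simp add: Phi_def)


lemma rel1_expand:
  "Phi (rel1 n \<alpha> \<beta> \<gamma> j) m m'' =
     Kt (j, [D ((j + n - 1) mod n), U ((j + n - 1) mod n), U j]) m m''
   - \<alpha> j * Kt (j, [U j, D j, U j]) m m''
   - \<beta> j * Kt (j, [U j, U ((j + 1) mod n), D ((j + 1) mod n)]) m m''
   - \<gamma> j * Kt (j, [U j]) m m''"
proof -
  let ?S = "{(j, [D ((j + n - 1) mod n), U ((j + n - 1) mod n), U j]), (j, [U j, D j, U j]),
             (j, [U j, U ((j + 1) mod n), D ((j + 1) mod n)]), (j, [U j])}"
  have "Phi (rel1 n \<alpha> \<beta> \<gamma> j) m m'' = (\<Sum>p\<in>?S. rel1 n \<alpha> \<beta> \<gamma> j p * Kt p m m'')"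
    by (rule Phi_gen) (auto simp: rel1_def basis_path_def split: if_splits)
  also have "\<dots> = Kt (j, [D ((j + n - 1) mod n), U ((j + n - 1) mod n), U j]) m m''
   - \<alpha> j * Kt (j, [U j, D j, U j]) m m''
   - \<beta> j * Kt (j, [U j, U ((j + 1) mod n), D ((j + 1) mod n)]) m m''
   - \<gamma> j * Kt (j, [U j]) m m''"
    by (simp add: rel1_def basis_path_def algebra_simps)
  finally show ?thesis .
qed

lemma rel2_expand:
  "Phi (rel2 n \<alpha> \<beta> \<gamma> j) m m'' =
     Kt ((j + 1) mod n, [D j, D ((j + n - 1) mod n), U ((j + n - 1) mod n)]) m m''
   - \<alpha> j * Kt ((j + 1) mod n, [D j, U j, D j]) m m''
   - \<beta> j * Kt ((j + 1) mod n, [U ((j + 1) mod n), D ((j + 1) mod n), D j]) m m''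
   - \<gamma> j * Kt ((j + 1) mod n, [D j]) m m''"
proof -
  let ?S = "{((j + 1) mod n, [D j, D ((j + n - 1) mod n), U ((j + n - 1) mod n)]), ((j + 1) mod n, [D j, U j, D j]),
             ((j + 1) mod n, [U ((j + 1) mod n), D ((j + 1) mod n), D j]), ((j + 1) mod n, [D j])}"
  have "Phi (rel2 n \<alpha> \<beta> \<gamma> j) m m'' = (\<Sum>p\<in>?S. rel2 n \<alpha> \<beta> \<gamma> j p * Kt p m m'')"
    by (rule Phi_gen) (auto simp: rel2_def basis_path_def split: if_splits)
  also have "\<dots> = Kt ((j + 1) mod n, [D j, D ((j + n - 1) mod n), U ((j + n - 1) mod n)]) m m''
   - \<alpha> j * Kt ((j + 1) mod n, [D j, U j, D j]) m m''
   - \<beta> j * Kt ((j + 1) mod n, [U ((j + 1) mod n), D ((j + 1) mod n), D j]) m m''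
   - \<gamma> j * Kt ((j + 1) mod n, [D j]) m m''"
    by (simp add: rel2_def basis_path_def algebra_simps)
  finally show ?thesis .
qed


lemma modM1: "j < n \<Longrightarrow> ((j + 1) mod n + n - 1) mod n = j"
proof -
  assume j: "j < n"
  show ?thesis
  proof (cases "j + 1 = n")
    case True then show ?thesis using j by simp
  next
    case False
    then have "(j + 1) mod n = j + 1" using j by simp
    then show ?thesis using j by (simp add: add.commute)
  qed
qed

lemma modM2: "j < n \<Longrightarrow> ((j + n - 1) mod n + 1) mod n = j"
proof -
  assume j: "j < n"
  show ?thesis
  proof (cases "j = 0")
    case True then show ?thesis using n1 by (simp add: mod_Suc)
  next
    case False
    then have "(j + n - 1) mod n = j - 1" using j
      by (metis Nat.add_diff_assoc2 One_nat_def Suc_leI add_diff_cancel_left' bot_nat_0.not_eq_extremum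
          le_add2 less_imp_diff_less mod_add_self2 mod_less)
    then show ?thesis using j False by simp
  qed
qed

lemma vert_pred': "0 < m \<Longrightarrow> vert (m - 1) = (vert m + 1) mod n"
  using vert_pred[of "m - 1"] by simp

lemma rel1_zero:
  assumes j: "j < n"
  shows "Phi (rel1 n \<alpha> \<beta> \<gamma> j) m m'' = 0"
proof (cases "vert m = (j + 1) mod n")
  case False
  then show ?thesis by (simp add: rel1_expand Kt_def scP_def)
next
  case True
  have v1: "vert (Suc m) = j" using True vert_Suc[of m] modM1[OF j] by simp
  have v2: "vert (Suc (Suc m)) = (j + n - 1) mod n" using vert_Suc[of "Suc m"] v1 by simp
  have m2: "((j + n - 1) mod n + 1) mod n = j" using modM2[OF j] .
  have rec: "cc (Suc m) = \<alpha> j * cc m + \<beta> j * cprev m + \<gamma> j" using cc_rec[of m] v1 by simp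
  show ?thesis
  proof (cases "m'' = Suc m")
    case False
    then show ?thesis
      by (cases m) (simp_all add: rel1_expand Kt_def idxP_def scP_def del: cc.simps)
  next
    case mm: True
    show ?thesis
    proof (cases "m = 0")
      case True
      then show ?thesis using \<open>vert m = (j + 1) mod n\<close> v1 v2 m2 rec mm
        by (simp add: rel1_expand Kt_def scP_def idxP_def cprev_def algebra_simps del: cc.simps)
    next
      case False
      have v0: "vert (m - 1) = ((j + 1) mod n + 1) mod n" using vert_pred'[of m] False \<open>vert m = (j + 1) mod n\<close> by simp
      have sm: "Suc (m - 1) = m" using False by simp
      show ?thesis using \<open>vert m = (j + 1) mod n\<close> v1 v2 m2 rec v0 sm False mm
        by (simp add: rel1_expand Kt_def scP_def idxP_def cprev_def algebra_simps del: cc.simps)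
    qed
  qed
qed


lemma rel2_zero:
  assumes j: "j < n"
  shows "Phi (rel2 n \<alpha> \<beta> \<gamma> j) m m'' = 0"
proof -
  have m2: "((j + n - 1) mod n + 1) mod n = j" using modM2[OF j] .
  show ?thesis
  proof (cases "vert m = j")
    case False
    then show ?thesis using m2 by (simp add: rel2_expand Kt_def scP_def del: cc.simps)
  next
    case vm: True
    have vS: "vert (Suc m) = (j + n - 1) mod n" using vert_Suc[of m] vm by simp
    show ?thesis
    proof (cases m)
      case 0
      then show ?thesis using vm vS m2 by (simp add: rel2_expand Kt_def scP_def del: cc.simps)
    next
      case (Suc k)
      have vk: "vert k = (j + 1) mod n" using vert_pred[of k] vm Suc by simp
      have rec: "cc (Suc k) = \<alpha> j * cc k + \<beta> j * cprev k + \<gamma> j" using cc_rec[of k] vm Suc by simp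
      show ?thesis
      proof (cases "m'' = k")
        case False
        then show ?thesis using Suc vm vS vk m2
          by (cases k) (simp_all add: rel2_expand Kt_def scP_def idxP_def del: cc.simps)
      next
        case mk: True
        show ?thesis
        proof (cases k)
          case 0
          then show ?thesis using Suc vm vS vk m2 mk rec
            by (simp add: rel2_expand Kt_def scP_def idxP_def cprev_def algebra_simps del: cc.simps)
        next
          case (Suc l)
          have vl: "vert l = ((j + 1) mod n + 1) mod n" using vert_pred[of l] vk Suc by simp
          show ?thesis using \<open>m = Suc k\<close> Suc vm vS vk vl m2 mk rec
            by (simp add: rel2_expand Kt_def scP_def idxP_def cprev_def algebra_simps del: cc.simps)
        qed
      qed
    qed
  qed
qed


lemma rel_valid1:
  assumes j: "j < n"
  shows "valid_path n (j, [D ((j + n - 1) mod n), U ((j + n - 1) mod n), U j])"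
    "valid_path n (j, [U j, D j, U j])"
    "valid_path n (j, [U j, U ((j + 1) mod n), D ((j + 1) mod n)])"
    "valid_path n (j, [U j])"
  using j modM2[OF j] n1 by (simp_all add: valid_path_def)

lemma rel_valid2:
  assumes j: "j < n"
  shows "valid_path n ((j + 1) mod n, [D j, D ((j + n - 1) mod n), U ((j + n - 1) mod n)])"
    "valid_path n ((j + 1) mod n, [D j, U j, D j])"
    "valid_path n ((j + 1) mod n, [U ((j + 1) mod n), D ((j + 1) mod n), D j])"
    "valid_path n ((j + 1) mod n, [D j])"
  using j modM2[OF j] n1 by (simp_all add: valid_path_def)

lemma rel1_carrier:
  assumes j: "j < n"
  shows "rel1 n \<alpha> \<beta> \<gamma> j \<in> carrier (path_algebra n)"
proof -
  let ?S = "{(j, [D ((j + n - 1) mod n), U ((j + n - 1) mod n), U j]), (j, [U j, D j, U j]),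
             (j, [U j, U ((j + 1) mod n), D ((j + 1) mod n)]), (j, [U j])}"
  have sub: "{p. rel1 n \<alpha> \<beta> \<gamma> j p \<noteq> 0} \<subseteq> ?S"
    by (auto simp: rel1_def basis_path_def split: if_splits)
  have "finite {p. rel1 n \<alpha> \<beta> \<gamma> j p \<noteq> 0}" by (rule finite_subset[OF sub]) simp
  moreover have "\<forall>p. rel1 n \<alpha> \<beta> \<gamma> j p \<noteq> 0 \<longrightarrow> valid_path n p"
    using sub rel_valid1[OF j] by blast
  ultimately show ?thesis by (simp add: PA_carrier)
qed

lemma rel2_carrier:
  assumes j: "j < n"
  shows "rel2 n \<alpha> \<beta> \<gamma> j \<in> carrier (path_algebra n)"
proof -
  let ?S = "{((j + 1) mod n, [D j, D ((j + n - 1) mod n), U ((j + n - 1) mod n)]), ((j + 1) mod n, [D j, U j, D j]),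
             ((j + 1) mod n, [U ((j + 1) mod n), D ((j + 1) mod n), D j]), ((j + 1) mod n, [D j])}"
  have sub: "{p. rel2 n \<alpha> \<beta> \<gamma> j p \<noteq> 0} \<subseteq> ?S"
    by (auto simp: rel2_def basis_path_def split: if_splits)
  have "finite {p. rel2 n \<alpha> \<beta> \<gamma> j p \<noteq> 0}" by (rule finite_subset[OF sub]) simp
  moreover have "\<forall>p. rel2 n \<alpha> \<beta> \<gamma> j p \<noteq> 0 \<longrightarrow> valid_path n p"
    using sub rel_valid2[OF j] by blast
  ultimately show ?thesis by (simp add: PA_carrier)
qed

definition Kset :: "(path \<Rightarrow> 'k) set" where
  "Kset = {f \<in> carrier (path_algebra n). \<forall>m m'. Phi f m m' = 0}"

lemma K_ideal: "ideal Kset (path_algebra n)"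
proof -
  interpret R: ring "path_algebra n :: (path \<Rightarrow> 'k) ring" by (rule PA_ring[OF n1])
  show ?thesis
  proof (rule idealI)
    show "ring (path_algebra n :: (path \<Rightarrow> 'k) ring)" by (rule R.ring_axioms)
    have "additive_subgroup Kset (path_algebra n)"
    proof (rule add_subgroupI')
      show "ring (path_algebra n :: (path \<Rightarrow> 'k) ring)" by (rule R.ring_axioms)
      show "Kset \<subseteq> carrier (path_algebra n)" by (auto simp: Kset_def)
      show "\<zero>\<^bsub>path_algebra n\<^esub> \<in> Kset" by (simp add: Kset_def PA_zero Phi_zero PA_carrier)
      show "x \<oplus>\<^bsub>path_algebra n\<^esub> y \<in> Kset" if "x \<in> Kset" "y \<in> Kset" for x y
        using that by (auto simp: Kset_def Phi_add)
      show "\<ominus>\<^bsub>path_algebra n\<^esub> x \<in> Kset" if "x \<in> Kset" for x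
        using that n1 by (auto simp: Kset_def PA_neg Phi_neg PA_carrier)
    qed
    then show "subgroup Kset (add_monoid (path_algebra n))" by (rule additive_subgroup.a_subgroup)
    show "x \<otimes>\<^bsub>path_algebra n\<^esub> a \<in> Kset" if "a \<in> Kset" "x \<in> carrier (path_algebra n)" for a x
      using that by (auto simp: Kset_def Phi_mult PA_mult_closed)
    show "a \<otimes>\<^bsub>path_algebra n\<^esub> x \<in> Kset" if "a \<in> Kset" "x \<in> carrier (path_algebra n)" for a x
      using that by (auto simp: Kset_def Phi_mult PA_mult_closed)
  qed
qed

lemma rels_carrier: "H_rels n \<alpha> \<beta> \<gamma> \<subseteq> carrier (path_algebra n)"
  using rel1_carrier rel2_carrier by (auto simp: H_rels_def)

lemma rels_K: "H_rels n \<alpha> \<beta> \<gamma> \<subseteq> Kset"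
  using rel1_carrier rel2_carrier rel1_zero rel2_zero by (auto simp: H_rels_def Kset_def)

lemma I_K: "genideal (path_algebra n) (H_rels n \<alpha> \<beta> \<gamma>) \<subseteq> Kset"
  using ring.genideal_minimal[OF PA_ring[OF n1] K_ideal rels_K] .

lemma I_ideal: "ideal (genideal (path_algebra n) (H_rels n \<alpha> \<beta> \<gamma>)) (path_algebra n)"
  using ring.genideal_ideal[OF PA_ring[OF n1] rels_carrier] .


fun dl :: "nat \<Rightarrow> nat \<Rightarrow> arr list" where
  "dl 0 j = []"
| "dl (Suc k) j = D ((j + n - 1) mod n) # dl k ((j + n - 1) mod n)"

lemma jm_lt: "(j + n - 1) mod n < n"
  using n1 by simp

lemma dl_idx: "idxL (dl k j) m = m - k"
  by (induction k arbitrary: j) auto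

lemma dl_noU: "U x \<notin> set (dl k j)"
  by (induction k arbitrary: j) auto

lemma dl_valid: "j < n \<Longrightarrow> valid_arrs n j (dl k j)"
  by (induction k arbitrary: j) (use n1 modM2 in auto)

lemma dl_sc: "j < n \<Longrightarrow> scL (dl k j) m = (if k \<le> m \<and> (k = 0 \<or> vert (m - k) = j) then 1 else 0)"
proof (induction k arbitrary: j)
  case 0 then show ?case by simp
next
  case (Suc k)
  let ?j' = "(j + n - 1) mod n"
  have IH: "scL (dl k ?j') m = (if k \<le> m \<and> (k = 0 \<or> vert (m - k) = ?j') then 1 else 0)"
    using Suc.IH[of ?j'] jm_lt by blast
  have "scL (dl (Suc k) j) m = scL (dl k ?j') m * scA (D ?j') (m - k)"
    by (simp add: dl_idx)
  also have "\<dots> = (if k < m \<and> vert (m - k) = ?j' then 1 else 0)"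
    using IH by auto
  also have "\<dots> = (if Suc k \<le> m \<and> vert (m - Suc k) = j then 1 else 0)"
  proof (cases "k < m")
    case True
    then have e: "m - k = Suc (m - Suc k)" by simp
    have "vert (m - k) = ?j' \<longleftrightarrow> vert (m - Suc k) = j"
    proof
      assume "vert (m - k) = ?j'"
      then show "vert (m - Suc k) = j" using vert_pred[of "m - Suc k"] e modM2[OF Suc.prems] by simp
    next
      assume "vert (m - Suc k) = j"
      then show "vert (m - k) = ?j'" using vert_Suc[of "m - Suc k"] e by simp
    qed
    then show ?thesis using True by auto
  next
    case False then show ?thesis by auto
  qed
  finally show ?case by simp
qed

definition im :: nat where "im = (i + n - 1) mod n"

definition p1 :: "nat \<Rightarrow> path" where "p1 N = (i, D im # U im # dl N i)"
definition p2 :: "nat \<Rightarrow> path" where "p2 N = (i, U i # D i # dl N i)"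
definition p3 :: "nat \<Rightarrow> path" where "p3 N = (i, dl N i)"

definition xN :: "nat \<Rightarrow> path \<Rightarrow> 'k" where
  "xN N = (\<lambda>p. basis_path (p1 N) p - \<alpha> i * basis_path (p2 N) p - \<gamma> i * basis_path (p3 N) p)"

lemma p_distinct: "p1 N \<noteq> p2 N" "p1 N \<noteq> p3 N" "p2 N \<noteq> p3 N"
  using dl_noU[of im N i] dl_noU[of i N i] by (auto simp: p1_def p2_def p3_def dest: sym)

lemma xN_carrier: "xN N \<in> carrier (path_algebra n)"
proof -
  have sub: "{p. xN N p \<noteq> 0} \<subseteq> {p1 N, p2 N, p3 N}"
    by (auto simp: xN_def basis_path_def split: if_splits)
  have v: "valid_path n (p1 N)" "valid_path n (p2 N)" "valid_path n (p3 N)"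
    using i_lt n1 modM2[OF i_lt] dl_valid[OF i_lt, of N]
    by (simp_all add: p1_def p2_def p3_def im_def valid_path_def)
  have "finite {p. xN N p \<noteq> 0}" by (rule finite_subset[OF sub]) simp
  moreover have "\<forall>p. xN N p \<noteq> 0 \<longrightarrow> valid_path n p" using sub v by blast
  ultimately show ?thesis by (simp add: PA_carrier)
qed

lemma xN_expand:
  "Phi (xN N) m m'' = Kt (p1 N) m m'' - \<alpha> i * Kt (p2 N) m m'' - \<gamma> i * Kt (p3 N) m m''"
proof -
  have "Phi (xN N) m m'' = (\<Sum>p\<in>{p1 N, p2 N, p3 N}. xN N p * Kt p m m'')"
    by (rule Phi_gen) (auto simp: xN_def basis_path_def split: if_splits)
  also have "\<dots> = Kt (p1 N) m m'' - \<alpha> i * Kt (p2 N) m m'' - \<gamma> i * Kt (p3 N) m m''"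
    using p_distinct[of N] by (simp add: xN_def basis_path_def algebra_simps)
  finally show ?thesis .
qed


lemma im_facts: "(im + 1) mod n = i" "vert (Suc 0) = im" "im < n"
  using modM2[OF i_lt] vert_Suc[of 0] vert_0 n1 by (simp_all add: im_def)

lemma xN_at: "Phi (xN N) N 0 = 1"
  using im_facts vert_0 i_lt
  by (simp add: xN_expand Kt_def scP_def idxP_def p1_def p2_def p3_def dl_idx dl_sc)

lemma xN_high:
  assumes "N < m"
  shows "Phi (xN N) m m'' = 0"
proof -
  obtain l where l: "m - N = Suc l" using assms by (metis Suc_diff_Suc)
  have Nm: "N \<le> m" using assms by simp
  show ?thesis
  proof (cases "m'' = Suc l")
    case False
    then show ?thesis using l
      by (simp add: xN_expand Kt_def idxP_def p1_def p2_def p3_def dl_idx del: cc.simps)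
  next
    case mm: True
    show ?thesis
    proof (cases "vert (Suc l) = i")
      case False
      then show ?thesis using im_facts l Nm i_lt mm
        by (simp add: xN_expand Kt_def scP_def idxP_def p1_def p2_def p3_def dl_idx dl_sc del: cc.simps)
    next
      case True
      have vl: "vert l = (i + 1) mod n" using vert_pred[of l] True by simp
      have vSS: "vert (Suc (Suc l)) = im" using vert_Suc[of "Suc l"] True by (simp add: im_def)
      have rec: "cc (Suc l) = \<alpha> i * cc l + \<gamma> i" using cc_rec[of l] True bi by simp
      show ?thesis using im_facts l Nm i_lt True vl vSS rec mm
        by (simp add: xN_expand Kt_def scP_def idxP_def p1_def p2_def p3_def dl_idx dl_sc algebra_simps del: cc.simps)
    qed
  qed
qed


abbreviation Ig :: "(path \<Rightarrow> 'k) set" where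
  "Ig \<equiv> genideal (path_algebra n) (H_rels n \<alpha> \<beta> \<gamma>)"

abbreviation HH :: "((path \<Rightarrow> 'k) set) ring" where
  "HH \<equiv> H_alg n \<alpha> \<beta> \<gamma>"

lemma HH_eq: "HH = path_algebra n Quot Ig"
  by (simp add: H_alg_def)

lemma coset_Phi:
  assumes a: "a \<in> carrier (path_algebra n)" and x: "x \<in> Ig +>\<^bsub>path_algebra n\<^esub> a"
  shows "Phi x m m' = Phi a m m'"
proof -
  obtain h where h: "h \<in> Ig" "x = h \<oplus>\<^bsub>path_algebra n\<^esub> a"
    using x unfolding a_r_coset_def' by blast
  have hK: "h \<in> Kset" using h(1) I_K by blast
  then have "h \<in> carrier (path_algebra n)" by (simp add: Kset_def)
  then show ?thesis using h hK a by (simp add: Phi_add Kset_def)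
qed

lemma HH_carrier: "C \<in> carrier HH \<longleftrightarrow> (\<exists>a\<in>carrier (path_algebra n). C = Ig +>\<^bsub>path_algebra n\<^esub> a)"
  unfolding HH_eq by (auto simp: FactRing_def A_RCOSETS_def')

definition Lch :: "nat \<Rightarrow> (path \<Rightarrow> 'k) set set" where
  "Lch k = {C \<in> carrier HH. \<forall>x\<in>C. \<forall>m\<ge>k. \<forall>m'. Phi x m m' = 0}"

lemma mem_Lch:
  assumes a: "a \<in> carrier (path_algebra n)"
  shows "Ig +>\<^bsub>path_algebra n\<^esub> a \<in> Lch k \<longleftrightarrow> (\<forall>m\<ge>k. \<forall>m'. Phi a m m' = 0)"
proof -
  interpret I: ideal Ig "path_algebra n" by (rule I_ideal)
  have "a \<in> Ig +>\<^bsub>path_algebra n\<^esub> a" using a by (rule I.a_rcos_self)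
  moreover have "Ig +>\<^bsub>path_algebra n\<^esub> a \<in> carrier HH" using a HH_carrier by blast
  ultimately show ?thesis
  proof (intro iffI)
    assume "Ig +>\<^bsub>path_algebra n\<^esub> a \<in> Lch k"
    then show "\<forall>m\<ge>k. \<forall>m'. Phi a m m' = 0"
      using \<open>a \<in> Ig +>\<^bsub>path_algebra n\<^esub> a\<close> unfolding Lch_def by blast
  next
    assume z: "\<forall>m\<ge>k. \<forall>m'. Phi a m m' = 0"
    have "\<forall>x\<in>Ig +>\<^bsub>path_algebra n\<^esub> a. \<forall>m\<ge>k. \<forall>m'. Phi x m m' = 0"
    proof (intro ballI allI impI)
      fix x m m' assume "x \<in> Ig +>\<^bsub>path_algebra n\<^esub> a" "k \<le> m"
      then show "Phi x m m' = 0" using coset_Phi[OF a] z by metis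
    qed
    then show "Ig +>\<^bsub>path_algebra n\<^esub> a \<in> Lch k"
      using \<open>Ig +>\<^bsub>path_algebra n\<^esub> a \<in> carrier HH\<close> unfolding Lch_def by blast
  qed
qed

end


context rep begin

lemma HH_ring: "ring HH"
  unfolding HH_eq by (rule ideal.quotient_is_ring[OF I_ideal])

lemma add_eq:
  assumes "a \<in> carrier (path_algebra n)" "b \<in> carrier (path_algebra n)"
  shows "(Ig +>\<^bsub>path_algebra n\<^esub> a) \<oplus>\<^bsub>HH\<^esub> (Ig +>\<^bsub>path_algebra n\<^esub> b) = Ig +>\<^bsub>path_algebra n\<^esub> (a \<oplus>\<^bsub>path_algebra n\<^esub> b)"
proof -
  interpret I: ideal Ig "path_algebra n" by (rule I_ideal)
  have "(Ig +>\<^bsub>path_algebra n\<^esub> a) \<oplus>\<^bsub>HH\<^esub> (Ig +>\<^bsub>path_algebra n\<^esub> b) = (Ig +>\<^bsub>path_algebra n\<^esub> a) <+>\<^bsub>path_algebra n\<^esub> (Ig +>\<^bsub>path_algebra n\<^esub> b)"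
    unfolding HH_eq FactRing_def by simp
  also have "\<dots> = Ig +>\<^bsub>path_algebra n\<^esub> (a \<oplus>\<^bsub>path_algebra n\<^esub> b)"
    by (rule I.a_rcos_sum[OF assms])
  finally show ?thesis .
qed

lemma mult_eq:
  assumes "a \<in> carrier (path_algebra n)" "b \<in> carrier (path_algebra n)"
  shows "(Ig +>\<^bsub>path_algebra n\<^esub> a) \<otimes>\<^bsub>HH\<^esub> (Ig +>\<^bsub>path_algebra n\<^esub> b) = Ig +>\<^bsub>path_algebra n\<^esub> (a \<otimes>\<^bsub>path_algebra n\<^esub> b)"
proof -
  interpret I: ideal Ig "path_algebra n" by (rule I_ideal)
  have "(Ig +>\<^bsub>path_algebra n\<^esub> a) \<otimes>\<^bsub>HH\<^esub> (Ig +>\<^bsub>path_algebra n\<^esub> b) = rcoset_mult (path_algebra n) Ig (Ig +>\<^bsub>path_algebra n\<^esub> a) (Ig +>\<^bsub>path_algebra n\<^esub> b)"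
    unfolding HH_eq FactRing_def by simp
  also have "\<dots> = Ig +>\<^bsub>path_algebra n\<^esub> (a \<otimes>\<^bsub>path_algebra n\<^esub> b)"
    by (rule I.rcoset_mult_add[OF assms])
  finally show ?thesis .
qed

lemma zero_eq: "\<zero>\<^bsub>HH\<^esub> = Ig +>\<^bsub>path_algebra n\<^esub> \<zero>\<^bsub>path_algebra n\<^esub>"
proof -
  interpret I: ideal Ig "path_algebra n" by (rule I_ideal)
  have "\<zero>\<^bsub>HH\<^esub> = Ig" unfolding HH_eq FactRing_def by simp
  also have "\<dots> = Ig +>\<^bsub>path_algebra n\<^esub> \<zero>\<^bsub>path_algebra n\<^esub>"
    by (rule I.a_rcos_const[symmetric]) (rule additive_subgroup.zero_closed[OF ideal.axioms(1)[OF I_ideal]])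
  finally show ?thesis .
qed

lemma neg_eq:
  assumes a: "a \<in> carrier (path_algebra n)"
  shows "\<ominus>\<^bsub>HH\<^esub> (Ig +>\<^bsub>path_algebra n\<^esub> a) = Ig +>\<^bsub>path_algebra n\<^esub> (\<ominus>\<^bsub>path_algebra n\<^esub> a)"
proof (rule abelian_group.minus_equality[OF ring.is_abelian_group[OF HH_ring]])
  interpret R: ring "path_algebra n :: (path \<Rightarrow> 'k) ring" by (rule PA_ring[OF n1])
  have na: "\<ominus>\<^bsub>path_algebra n\<^esub> a \<in> carrier (path_algebra n)" using a by simp
  show "(Ig +>\<^bsub>path_algebra n\<^esub> (\<ominus>\<^bsub>path_algebra n\<^esub> a)) \<oplus>\<^bsub>HH\<^esub> (Ig +>\<^bsub>path_algebra n\<^esub> a) = \<zero>\<^bsub>HH\<^esub>"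
    unfolding add_eq[OF na a] zero_eq using a by (simp add: R.l_neg)
  show "Ig +>\<^bsub>path_algebra n\<^esub> a \<in> carrier HH" using a HH_carrier by blast
  show "Ig +>\<^bsub>path_algebra n\<^esub> (\<ominus>\<^bsub>path_algebra n\<^esub> a) \<in> carrier HH" using na HH_carrier by blast
qed


lemma Lch_rep:
  assumes "x \<in> Lch k"
  obtains a where "a \<in> carrier (path_algebra n)" "x = Ig +>\<^bsub>path_algebra n\<^esub> a"
    "\<forall>m\<ge>k. \<forall>m'. Phi a m m' = 0"
proof -
  have "x \<in> carrier HH" using assms unfolding Lch_def by blast
  then obtain a where a: "a \<in> carrier (path_algebra n)" "x = Ig +>\<^bsub>path_algebra n\<^esub> a"
    unfolding HH_carrier by blast
  have "\<forall>m\<ge>k. \<forall>m'. Phi a m m' = 0" using assms unfolding a(2) mem_Lch[OF a(1)] .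
  then show ?thesis using a that by blast
qed

lemma Lch_left_ideal: "left_ideal (Lch k) HH"
proof -
  have sub: "Lch k \<subseteq> carrier HH" unfolding Lch_def by blast
  have "additive_subgroup (Lch k) HH"
  proof (rule add_subgroupI'[OF HH_ring sub])
    show "\<zero>\<^bsub>HH\<^esub> \<in> Lch k"
      unfolding zero_eq by (subst mem_Lch) (simp_all add: PA_zero Phi_zero PA_carrier)
    show "x \<oplus>\<^bsub>HH\<^esub> y \<in> Lch k" if xy: "x \<in> Lch k" "y \<in> Lch k" for x y
    proof -
      obtain a where a: "a \<in> carrier (path_algebra n)" "x = Ig +>\<^bsub>path_algebra n\<^esub> a"
        "\<forall>m\<ge>k. \<forall>m'. Phi a m m' = 0" using Lch_rep[OF xy(1)] by blast
      obtain b where b: "b \<in> carrier (path_algebra n)" "y = Ig +>\<^bsub>path_algebra n\<^esub> b"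
        "\<forall>m\<ge>k. \<forall>m'. Phi b m m' = 0" using Lch_rep[OF xy(2)] by blast
      have c: "a \<oplus>\<^bsub>path_algebra n\<^esub> b \<in> carrier (path_algebra n)"
        using PA_add_closed[OF a(1) b(1)] by (simp add: PA_add)
      have "\<forall>m\<ge>k. \<forall>m'. Phi (a \<oplus>\<^bsub>path_algebra n\<^esub> b) m m' = 0"
        using a(3) b(3) Phi_add[OF a(1) b(1)] by simp
      then show ?thesis unfolding a(2) b(2) add_eq[OF a(1) b(1)] mem_Lch[OF c] .
    qed
    show "\<ominus>\<^bsub>HH\<^esub> x \<in> Lch k" if xk: "x \<in> Lch k" for x
    proof -
      obtain a where a: "a \<in> carrier (path_algebra n)" "x = Ig +>\<^bsub>path_algebra n\<^esub> a"
        "\<forall>m\<ge>k. \<forall>m'. Phi a m m' = 0" using Lch_rep[OF xk] by blast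
      have e: "\<ominus>\<^bsub>path_algebra n\<^esub> a = (\<lambda>p. - a p)" using PA_neg[OF n1 a(1)] .
      have c: "(\<lambda>p. - a p) \<in> carrier (path_algebra n)" using a(1) by (simp add: PA_carrier)
      have "\<forall>m\<ge>k. \<forall>m'. Phi (\<lambda>p. - a p) m m' = 0" using a(3) by (simp add: Phi_neg)
      then show ?thesis unfolding a(2) neg_eq[OF a(1)] e mem_Lch[OF c] .
    qed
  qed
  moreover have "c \<otimes>\<^bsub>HH\<^esub> x \<in> Lch k" if cx: "c \<in> carrier HH" "x \<in> Lch k" for c x
  proof -
    obtain a where a: "a \<in> carrier (path_algebra n)" "x = Ig +>\<^bsub>path_algebra n\<^esub> a"
      "\<forall>m\<ge>k. \<forall>m'. Phi a m m' = 0" using Lch_rep[OF cx(2)] by blast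
    obtain b where b: "b \<in> carrier (path_algebra n)" "c = Ig +>\<^bsub>path_algebra n\<^esub> b"
      using cx(1) unfolding HH_carrier by blast
    have cc: "b \<otimes>\<^bsub>path_algebra n\<^esub> a \<in> carrier (path_algebra n)" using PA_mult_closed[OF b(1) a(1)] .
    have "\<forall>m\<ge>k. \<forall>m'. Phi (b \<otimes>\<^bsub>path_algebra n\<^esub> a) m m' = 0"
    proof (intro allI impI)
      fix m m' assume "k \<le> m"
      then show "Phi (b \<otimes>\<^bsub>path_algebra n\<^esub> a) m m' = 0"
        unfolding Phi_mult[OF b(1) a(1)] using a(3) by simp
    qed
    then show ?thesis unfolding a(2) b(2) mult_eq[OF b(1) a(1)] mem_Lch[OF cc] .
  qed
  ultimately show ?thesis unfolding left_ideal_def by blast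
qed

lemma not_left_noetherian: "\<not> left_noetherian HH"
proof
  assume "left_noetherian HH"
  moreover have "\<forall>k. left_ideal (Lch k) HH" using Lch_left_ideal by blast
  moreover have "\<forall>k. Lch k \<subseteq> Lch (Suc k)" by (auto simp: Lch_def)
  ultimately obtain N where N: "\<forall>m\<ge>N. Lch m = Lch N" unfolding left_noetherian_def by blast
  have "Ig +>\<^bsub>path_algebra n\<^esub> xN N \<in> Lch (Suc N)"
    using xN_high by (simp add: mem_Lch[OF xN_carrier])
  moreover have "Ig +>\<^bsub>path_algebra n\<^esub> xN N \<notin> Lch N"
  proof -
    have "\<not> (\<forall>m\<ge>N. \<forall>m'. Phi (xN N) m m' = 0)" using xN_at[of N] by force
    then show ?thesis using mem_Lch[OF xN_carrier] by blast
  qed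
  moreover have "Lch (Suc N) = Lch N" using N by (meson le_SucI order_refl)
  ultimately show False by blast
qed

end


theorem lemma4p1:
  fixes n :: nat and \<alpha> \<beta> \<gamma> :: "nat \<Rightarrow> 'k::{alg_closed_field, field_char_0}"
  assumes "n \<ge> 1"
    and "\<exists>i<n. \<beta> i = 0"
  shows "\<not> noetherian (H_alg n \<alpha> \<beta> \<gamma>)"
proof -
  obtain i where i: "i < n" "\<beta> i = 0" using assms(2) by blast
  interpret rep n i \<alpha> \<beta> \<gamma> by (unfold_locales) (use assms(1) i in auto)
  show ?thesis using not_left_noetherian unfolding noetherian_def by blast
qed

end
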